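(* For $n\ge2$ let $E_n=(\mathbb{R}^2,\|\cdot\|_n)$ with $\|(x,y)\|_n=(|x|^n+|y|^n)^{1/n}$, and let $X$ be the Banach space of sequences $u=(u_n)_{n\ge2}$ with $u_n\in E_n$ and $\|u\|=\left(\sum_{n=2}^\infty\|u_n\|_n^2\right)^{1/2}<\infty$. Let $B_X=\{u\in X:\|u\|\le1\}$ and $B=\{u\in X:\|u\|\ge2\}$. Then there exist bounded sequences $\{x_n\},\{z_n\}\subset B_X$ and $\{y_n\}\subset B$ with $\lim_n\|x_n-y_n\|=\lim_n\|z_n-y_n\|=\mathrm{dist}(B_X,B)=1$ and $\lim_n\|x_n-z_n\|=2$; in particular the ordered pair $(B_X,B)$ has neither the $UC$ property nor the $BUC$ property.
   Context: $\mathrm{dist}(A,B)=\inf\{\|a-b\|:a\in A,b\in B\}$. The ordered pair $(A,B)$ has the $UC$ property if for all sequences $\{x_n\},\{z_n\}\subset A$, $\{y_n\}\subset B$ with $\lim_n\|x_n-y_n\|=\lim_n\|z_n-y_n\|=\mathrm{dist}(A,B)$ one has $\lim_n\|x_n-z_n\|=0$. It has the bounded $UC$ property ($BUC$) if the same implication holds whenever in addition $\{x_n\}$ and $\{z_n\}$ are bounded. *)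

theory Defs
  imports "HOL-Analysis.Analysis"
begin

text \<open>The space X: elements are sequences u indexed by n >= 2 with u n in R^2
  (represented as real \<times> real); entries with index n < 2 are forced to be 0.\<close>

definition pnorm :: "nat \<Rightarrow> real \<times> real \<Rightarrow> real" where
  "pnorm n v = (\<bar>fst v\<bar> powr real n + \<bar>snd v\<bar> powr real n) powr (1 / real n)"

definition inX :: "(nat \<Rightarrow> real \<times> real) \<Rightarrow> bool" where
  "inX u \<longleftrightarrow> (\<forall>n<2. u n = 0) \<and> summable (\<lambda>n. (pnorm n (u n))\<^sup>2)"

definition Xnorm :: "(nat \<Rightarrow> real \<times> real) \<Rightarrow> real" where
  "Xnorm u = sqrt (\<Sum>n. (pnorm n (u n))\<^sup>2)"

definition BX :: "(nat \<Rightarrow> real \<times> real) set" where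
  "BX = {u. inX u \<and> Xnorm u \<le> 1}"

definition Bout :: "(nat \<Rightarrow> real \<times> real) set" where
  "Bout = {u. inX u \<and> Xnorm u \<ge> 2}"

definition distX :: "(nat \<Rightarrow> real \<times> real) set \<Rightarrow> (nat \<Rightarrow> real \<times> real) set \<Rightarrow> real" where
  "distX A C = Inf {Xnorm (a - c) | a c. a \<in> A \<and> c \<in> C}"

definition UC_prop :: "(nat \<Rightarrow> real \<times> real) set \<Rightarrow> (nat \<Rightarrow> real \<times> real) set \<Rightarrow> bool" where
  "UC_prop A C \<longleftrightarrow> (\<forall>x z y. (\<forall>k. x k \<in> A \<and> z k \<in> A \<and> y k \<in> C)
     \<and> (\<lambda>k. Xnorm (x k - y k)) \<longlonglongrightarrow> distX A C
     \<and> (\<lambda>k. Xnorm (z k - y k)) \<longlonglongrightarrow> distX A C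
     \<longrightarrow> (\<lambda>k. Xnorm (x k - z k)) \<longlonglongrightarrow> 0)"

definition BUC_prop :: "(nat \<Rightarrow> real \<times> real) set \<Rightarrow> (nat \<Rightarrow> real \<times> real) set \<Rightarrow> bool" where
  "BUC_prop A C \<longleftrightarrow> (\<forall>x z y. (\<forall>k. x k \<in> A \<and> z k \<in> A \<and> y k \<in> C)
     \<and> (\<exists>M. \<forall>k. Xnorm (x k) \<le> M \<and> Xnorm (z k) \<le> M)
     \<and> (\<lambda>k. Xnorm (x k - y k)) \<longlonglongrightarrow> distX A C
     \<and> (\<lambda>k. Xnorm (z k - y k)) \<longlonglongrightarrow> distX A C
     \<longrightarrow> (\<lambda>k. Xnorm (x k - z k)) \<longlonglongrightarrow> 0)"

end

theory Submission
  imports Defs "HOL-Real_Asymp.Real_Asymp" "HOL-Real_Asymp.Real_Asymp"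
begin

lemma abs_powr_nat: "n \<ge> 1 \<Longrightarrow> \<bar>a::real\<bar> powr real n = \<bar>a\<bar> ^ n"
  by (cases "a = 0") (auto simp: powr_realpow)

lemma pnorm_pow: "n \<ge> 1 \<Longrightarrow> pnorm n v = (\<bar>fst v\<bar>^n + \<bar>snd v\<bar>^n) powr (1 / real n)"
  by (simp add: pnorm_def abs_powr_nat)

lemma pnorm_nonneg: "pnorm n v \<ge> 0" by (simp add: pnorm_def)

lemma pnorm_zero[simp]: "pnorm n 0 = 0" by (simp add: pnorm_def)

lemma pnorm_uminus[simp]: "pnorm n (- v) = pnorm n v" by (simp add: pnorm_def)

lemma root_pow: assumes "n \<ge> 1" "(x::real) \<ge> 0" shows "(x ^ n) powr (1 / real n) = x"
proof (cases "x = 0")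
  case True thus ?thesis using assms by simp
next
  case False
  hence "x > 0" using assms by simp
  hence "(x ^ n) = x powr real n" by (simp add: powr_realpow)
  thus ?thesis using assms \<open>x>0\<close> by (simp add: powr_powr)
qed

lemma powr_root_pow: assumes "n\<ge>1" "(S::real) \<ge> 0" shows "(S powr (1/real n)) ^ n = S"
proof (cases "S = 0")
  case True thus ?thesis using assms by simp
next
  case False
  hence "S > 0" using assms by simp
  hence "(S powr (1/real n)) ^ n = (S powr (1/real n)) powr real n" by (simp add: powr_realpow)
  also have "\<dots> = S" using assms \<open>S>0\<close> by (simp add: powr_powr)
  finally show ?thesis .
qed

lemma convex_pow: "convex_on {0::real..} (\<lambda>x. x^n)"
  by (cases "even n") (auto intro: convex_power_odd convex_on_subset[OF convex_power_even])

lemma pnorm_triangle: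
  fixes u v :: "real \<times> real"
  shows "pnorm n (u + v) \<le> pnorm n u + pnorm n v"
proof (cases "n = 0")
  case True
  show ?thesis using True by (cases u, cases v) (auto simp: pnorm_def)
next
  case False
  hence n: "n \<ge> 1" by simp
  obtain a1 a2 where u: "u = (a1,a2)" by (cases u)
  obtain b1 b2 where v: "v = (b1,b2)" by (cases v)
  define A where "A = pnorm n u"
  define B where "B = pnorm n v"
  have A0: "A \<ge> 0" "B \<ge> 0" by (simp_all add: A_def B_def pnorm_nonneg)
  have Apow: "A^n = \<bar>a1\<bar>^n + \<bar>a2\<bar>^n" unfolding A_def u using n by (simp add: pnorm_pow powr_root_pow)
  have Bpow: "B^n = \<bar>b1\<bar>^n + \<bar>b2\<bar>^n" unfolding B_def v using n by (simp add: pnorm_pow powr_root_pow)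
  show ?thesis
  proof (cases "A = 0 \<or> B = 0")
    case True
    have z: "\<bar>x\<bar>^n + \<bar>y\<bar>^n = 0 \<Longrightarrow> (x, y) = (0::real\<times>real)" for x y :: real
      using n by (simp add: add_nonneg_eq_0_iff zero_prod_def)
    have "u = 0 \<or> v = 0"
    proof (cases "A = 0")
      case True
      then show ?thesis using Apow n u z[of a1 a2] by (simp add: power_0_left)
    next
      case False
      then have "B = 0" using \<open>A = 0 \<or> B = 0\<close> by simp
      then show ?thesis using Bpow n v z[of b1 b2] by (simp add: power_0_left)
    qed
    thus ?thesis using A0 by (auto simp: A_def B_def)
  next
    case False
    hence AB: "A > 0" "B > 0" using A0 by auto
    define t where "t = B / (A+B)"
    have t: "0 \<le> t" "t \<le> 1" using AB by (auto simp: t_def)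
    have key: "((s + r)/(A+B))^n \<le> (1-t) * (s/A)^n + t*(r/B)^n" if "s \<ge> 0" "r \<ge> 0" for s r
    proof -
      have t1: "1 - t = A/(A+B)" using AB by (simp add: t_def field_simps)
      have "(1-t) *\<^sub>R (s/A) + t *\<^sub>R (r/B) = s/(A+B) + r/(A+B)"
      proof -
        have "(1-t)*(s/A) = s/(A+B)" using AB by (simp add: t1)
        moreover have "t*(r/B) = r/(A+B)" using AB by (simp add: t_def)
        ultimately show ?thesis by simp
      qed
      also have "\<dots> = (s+r)/(A+B)" by (simp add: add_divide_distrib)
      finally have "(1-t) *\<^sub>R (s/A) + t *\<^sub>R (r/B) = (s+r)/(A+B)" .
      moreover have "((1-t) *\<^sub>R (s/A) + t *\<^sub>R (r/B))^n \<le> (1-t)*(s/A)^n + t*(r/B)^n"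
        using convex_onD[OF convex_pow t, of "s/A" "r/B"] that AB by simp
      ultimately show ?thesis by simp
    qed
    have k: "(\<bar>a+b\<bar>/(A+B))^n \<le> (1-t)*(\<bar>a\<bar>/A)^n + t*(\<bar>b\<bar>/B)^n" for a b :: real
    proof -
      have "(\<bar>a+b\<bar>/(A+B))^n \<le> ((\<bar>a\<bar>+\<bar>b\<bar>)/(A+B))^n"
        using AB by (intro power_mono divide_right_mono abs_triangle_ineq) auto
      also have "\<dots> \<le> (1-t)*(\<bar>a\<bar>/A)^n + t*(\<bar>b\<bar>/B)^n" by (rule key) auto
      finally show ?thesis .
    qed
    have "(\<bar>a1+b1\<bar>/(A+B))^n + (\<bar>a2+b2\<bar>/(A+B))^n \<le>
       (1-t)*((\<bar>a1\<bar>/A)^n + (\<bar>a2\<bar>/A)^n) + t*((\<bar>b1\<bar>/B)^n + (\<bar>b2\<bar>/B)^n)"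
      using add_mono[OF k[of a1 b1] k[of a2 b2]] by (simp add: algebra_simps)
    also have "(\<bar>a1\<bar>/A)^n + (\<bar>a2\<bar>/A)^n = 1" using AB
      by (simp add: power_divide add_divide_distrib[symmetric] Apow[symmetric])
    also have "(\<bar>b1\<bar>/B)^n + (\<bar>b2\<bar>/B)^n = 1" using AB
      by (simp add: power_divide add_divide_distrib[symmetric] Bpow[symmetric])
    finally have "(\<bar>a1+b1\<bar>^n + \<bar>a2+b2\<bar>^n) / (A+B)^n \<le> 1"
      by (simp add: power_divide add_divide_distrib)
    hence S: "\<bar>a1+b1\<bar>^n + \<bar>a2+b2\<bar>^n \<le> (A+B)^n" using AB
      by (simp add: divide_le_eq)
    have "pnorm n (u+v) = (\<bar>a1+b1\<bar>^n + \<bar>a2+b2\<bar>^n) powr (1/real n)" using n u v by (simp add: pnorm_pow)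
    also have "\<dots> \<le> ((A+B)^n) powr (1/real n)" by (rule powr_mono2) (auto simp: S)
    also have "\<dots> = A + B" using root_pow n AB by simp
    finally show ?thesis by (simp add: A_def B_def)
  qed
qed

lemma X_tri:
  assumes su: "summable (\<lambda>n. (pnorm n (u n))\<^sup>2)" and sv: "summable (\<lambda>n. (pnorm n (v n))\<^sup>2)"
  shows "summable (\<lambda>n. (pnorm n (u n + v n))\<^sup>2)" and "Xnorm (\<lambda>n. u n + v n) \<le> Xnorm u + Xnorm v"
proof -
  let ?f = "\<lambda>n. (pnorm n (u n) + pnorm n (v n))\<^sup>2"
  have le: "(pnorm n (u n + v n))\<^sup>2 \<le> ?f n" for n
    using pnorm_triangle[of n "u n" "v n"] pnorm_nonneg[of n "u n + v n"] by (simp add: power_mono)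
  have le2: "?f n \<le> 2*(pnorm n (u n))\<^sup>2 + 2*(pnorm n (v n))\<^sup>2" for n
  proof -
    have "0 \<le> (pnorm n (u n) - pnorm n (v n))\<^sup>2" by simp
    thus ?thesis by (simp add: power2_diff power2_sum)
  qed
  have sf: "summable ?f"
    by (rule summable_comparison_test'[where N=0, OF summable_add[OF summable_mult[OF su] summable_mult[OF sv]]])
       (use le2 in auto)
  show s1: "summable (\<lambda>n. (pnorm n (u n + v n))\<^sup>2)"
    by (rule summable_comparison_test'[where N=0, OF sf]) (use le in auto)
  have "(\<Sum>n. (pnorm n (u n + v n))\<^sup>2) \<le> (\<Sum>n. ?f n)" by (rule suminf_le[OF le s1 sf])
  also have "(\<Sum>n. ?f n) \<le> (Xnorm u + Xnorm v)\<^sup>2"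
  proof (rule suminf_le_const[OF sf])
    fix N
    have "sqrt (\<Sum>n<N. ?f n) = L2_set (\<lambda>n. pnorm n (u n) + pnorm n (v n)) {..<N}" by (simp add: L2_set_def)
    also have "\<dots> \<le> L2_set (\<lambda>n. pnorm n (u n)) {..<N} + L2_set (\<lambda>n. pnorm n (v n)) {..<N}"
      by (rule L2_set_triangle_ineq)
    also have "\<dots> \<le> Xnorm u + Xnorm v"
    proof (rule add_mono)
      show "L2_set (\<lambda>n. pnorm n (u n)) {..<N} \<le> Xnorm u" unfolding L2_set_def Xnorm_def
        by (rule real_sqrt_le_mono, rule sum_le_suminf[OF su]) auto
      show "L2_set (\<lambda>n. pnorm n (v n)) {..<N} \<le> Xnorm v" unfolding L2_set_def Xnorm_def
        by (rule real_sqrt_le_mono, rule sum_le_suminf[OF sv]) auto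
    qed
    finally have h: "sqrt (\<Sum>n<N. ?f n) \<le> Xnorm u + Xnorm v" .
    have nn: "0 \<le> (\<Sum>n<N. ?f n)" by (intro sum_nonneg) auto
    have "(\<Sum>n<N. ?f n) = (sqrt (\<Sum>n<N. ?f n))\<^sup>2"
      using nn by (rule real_sqrt_pow2[symmetric])
    also have "\<dots> \<le> (Xnorm u + Xnorm v)\<^sup>2" by (rule power_mono[OF h]) (use nn in simp)
    finally show "(\<Sum>n<N. ?f n) \<le> (Xnorm u + Xnorm v)\<^sup>2" .
  qed
  finally have "(\<Sum>n. (pnorm n (u n + v n))\<^sup>2) \<le> (Xnorm u + Xnorm v)\<^sup>2" .
  hence "Xnorm (\<lambda>n. u n + v n) \<le> sqrt ((Xnorm u + Xnorm v)\<^sup>2)" unfolding Xnorm_def[of "\<lambda>n. u n + v n"] by (rule real_sqrt_le_mono)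
  also have "\<dots> = Xnorm u + Xnorm v"
  proof -
    have "0 \<le> Xnorm u" using suminf_nonneg[OF su] by (simp add: Xnorm_def)
    moreover have "0 \<le> Xnorm v" using suminf_nonneg[OF sv] by (simp add: Xnorm_def)
    ultimately show ?thesis by simp
  qed
  finally show "Xnorm (\<lambda>n. u n + v n) \<le> Xnorm u + Xnorm v" .
qed

lemma inX_add: "inX u \<Longrightarrow> inX v \<Longrightarrow> inX (\<lambda>n. u n + v n)"
  unfolding inX_def using X_tri(1) by auto

lemma inX_uminus: "inX u \<Longrightarrow> inX (- u)"
  unfolding inX_def by auto

lemma inX_diff: "inX u \<Longrightarrow> inX v \<Longrightarrow> inX (u - v)"
proof -
  assume "inX u" "inX v"
  from inX_add[OF this(1) inX_uminus[OF this(2)]] show ?thesis by (simp add: fun_diff_def)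
qed

lemma Xnorm_uminus: "Xnorm (- u) = Xnorm u"
  by (simp add: Xnorm_def)

lemma Xnorm_tri: "inX u \<Longrightarrow> inX v \<Longrightarrow> Xnorm (\<lambda>n. u n + v n) \<le> Xnorm u + Xnorm v"
  unfolding inX_def using X_tri(2) by auto

definition dl :: "nat \<Rightarrow> real \<times> real \<Rightarrow> nat \<Rightarrow> real \<times> real" where
  "dl m w = (\<lambda>n. if n = m then w else 0)"

lemma dl_fun: "(\<lambda>n. (pnorm n (dl m w n))\<^sup>2) = (\<lambda>n. if n = m then (pnorm m w)\<^sup>2 else 0)"
  by (auto simp: dl_def)

lemma Xnorm_dl: "Xnorm (dl m w) = pnorm m w"
proof -
  have "(\<Sum>n. (pnorm n (dl m w n))\<^sup>2) = (pnorm m w)\<^sup>2"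
    unfolding dl_fun by (rule sums_unique[symmetric]) (rule sums_single)
  thus ?thesis by (simp add: Xnorm_def pnorm_nonneg)
qed

lemma inX_dl: "m \<ge> 2 \<Longrightarrow> inX (dl m w)"
  unfolding inX_def dl_fun by (auto simp: dl_def)

lemma dl_diff: "dl m w1 - dl m w2 = dl m (w1 - w2)"
  by (auto simp: dl_def fun_eq_iff)

lemma minus_diff_eq_fun: "- (a - c) = c - (a :: nat \<Rightarrow> real \<times> real)"
  by (simp add: fun_eq_iff)

lemma distX_eq: "distX BX Bout = 1"
proof -
  let ?S = "{Xnorm (a - c) | a c. a \<in> BX \<and> c \<in> Bout}"
  have e1: "pnorm 2 (1,0) = 1" by (simp add: pnorm_pow)
  have e2: "pnorm 2 (2,0) = 2" by (simp add: pnorm_pow root_pow)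
  have e3: "pnorm 2 (-1,0) = 1" by (simp add: pnorm_pow)
  have "1 \<in> ?S"
  proof -
    have "dl 2 (1,0) \<in> BX" using inX_dl[of 2] by (simp add: BX_def Xnorm_dl e1)
    moreover have "dl 2 (2,0) \<in> Bout" using inX_dl[of 2] by (simp add: Bout_def Xnorm_dl e2)
    moreover have "Xnorm (dl 2 (1,0) - dl 2 (2,0)) = 1" by (simp add: dl_diff Xnorm_dl e3)
    ultimately show ?thesis by force
  qed
  moreover have "1 \<le> s" if "s \<in> ?S" for s
  proof -
    obtain a c where s: "s = Xnorm (a - c)" and a: "a \<in> BX" and c: "c \<in> Bout" using \<open>s \<in> ?S\<close> by blast
    have ia: "inX a" and ic: "inX c" using a c by (auto simp: BX_def Bout_def)
    have "Xnorm (\<lambda>n. a n + (c - a) n) \<le> Xnorm a + Xnorm (c - a)" by (rule Xnorm_tri[OF ia inX_diff[OF ic ia]])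
    moreover have "Xnorm (c - a) = Xnorm (a - c)" using Xnorm_uminus[of "a - c"]
      by (metis (no_types) minus_diff_eq_fun)
    ultimately show ?thesis using a c s by (auto simp: BX_def Bout_def)
  qed
  ultimately show ?thesis unfolding distX_def by (intro cInf_eq_minimum) auto
qed

lemma pn_eq: assumes "m \<ge> 1" "\<bar>a\<bar> = \<bar>b\<bar>" shows "pnorm m (a, b) = 2 powr (1 / real m) * \<bar>b\<bar>"
proof -
  have "pnorm m (a, b) = (2 * \<bar>b\<bar>^m) powr (1 / real m)" using assms by (simp add: pnorm_pow)
  also have "\<dots> = 2 powr (1 / real m) * (\<bar>b\<bar>^m) powr (1 / real m)" by (simp add: powr_mult)
  also have "(\<bar>b\<bar>^m) powr (1 / real m) = \<bar>b\<bar>" using assms by (simp add: root_pow)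
  finally show ?thesis .
qed

lemma pn_0: assumes "m \<ge> 1" shows "pnorm m (b, 0) = \<bar>b\<bar>" "pnorm m (0, b) = \<bar>b\<bar>"
  using assms by (simp_all add: pnorm_pow root_pow power_0_left)

lemma pn_bounds: assumes "n \<ge> 1"
  shows "max \<bar>fst v\<bar> \<bar>snd v\<bar> \<le> pnorm n v" "pnorm n v \<le> 2 powr (1 / real n) * max \<bar>fst v\<bar> \<bar>snd v\<bar>"
proof -
  define M where "M = max \<bar>fst v\<bar> \<bar>snd v\<bar>"
  have M0: "M \<ge> 0" by (simp add: M_def)
  have l: "M^n \<le> \<bar>fst v\<bar>^n + \<bar>snd v\<bar>^n" by (simp add: M_def max_def)
  have u: "\<bar>fst v\<bar>^n + \<bar>snd v\<bar>^n \<le> 2 * M^n"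
  proof -
    have "\<bar>fst v\<bar>^n \<le> M^n" "\<bar>snd v\<bar>^n \<le> M^n" by (auto simp: M_def intro: power_mono)
    thus ?thesis by simp
  qed
  have "M = (M^n) powr (1 / real n)" using assms M0 by (simp add: root_pow)
  also have "\<dots> \<le> (\<bar>fst v\<bar>^n + \<bar>snd v\<bar>^n) powr (1 / real n)" using l M0 by (intro powr_mono2) auto
  also have "\<dots> = pnorm n v" using assms by (simp add: pnorm_pow)
  finally show "max \<bar>fst v\<bar> \<bar>snd v\<bar> \<le> pnorm n v" by (simp add: M_def)
  have "pnorm n v = (\<bar>fst v\<bar>^n + \<bar>snd v\<bar>^n) powr (1 / real n)" using assms by (simp add: pnorm_pow)
  also have "\<dots> \<le> (2 * M^n) powr (1 / real n)" using u by (intro powr_mono2) auto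
  also have "\<dots> = 2 powr (1 / real n) * (M^n) powr (1 / real n)" using M0 by (simp add: powr_mult)
  also have "(M^n) powr (1 / real n) = M" using assms M0 by (simp add: root_pow)
  finally show "pnorm n v \<le> 2 powr (1 / real n) * max \<bar>fst v\<bar> \<bar>snd v\<bar>" by (simp add: M_def)
qed

lemma lim_aux:
  fixes c :: "nat \<Rightarrow> real" and w :: "nat \<Rightarrow> real \<times> real"
  assumes c_def: "c = (\<lambda>k. inverse (2 powr (1 / real (k+2))))"
    and w: "\<And>k. max \<bar>fst (w k)\<bar> \<bar>snd (w k)\<bar> = 2 - c k"
  shows "(\<lambda>k. pnorm (k+2) (w k)) \<longlonglongrightarrow> 1"
proof (rule real_tendsto_sandwich)
  show "\<forall>\<^sub>F k in sequentially. 2 - c k \<le> pnorm (k+2) (w k)"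
    using pn_bounds(1)[of "k+2" "w k" for k] w by (auto intro!: always_eventually)
  show "\<forall>\<^sub>F k in sequentially. pnorm (k+2) (w k) \<le> 2 powr (1 / real (k+2)) * (2 - c k)"
    using pn_bounds(2)[of "k+2" "w k" for k] w by (auto intro!: always_eventually)
  show "(\<lambda>k. 2 - c k) \<longlonglongrightarrow> 1" unfolding c_def by real_asymp
  show "(\<lambda>k. 2 powr (1 / real (k+2)) * (2 - c k)) \<longlonglongrightarrow> 1" unfolding c_def by real_asymp
qed

theorem mainTheorem18:
  shows "(\<exists>x z y. (\<forall>k. x k \<in> BX \<and> z k \<in> BX \<and> y k \<in> Bout)
      \<and> (\<exists>M. \<forall>k. Xnorm (x k) \<le> M \<and> Xnorm (z k) \<le> M)
      \<and> distX BX Bout = 1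
      \<and> (\<lambda>k. Xnorm (x k - y k)) \<longlonglongrightarrow> distX BX Bout
      \<and> (\<lambda>k. Xnorm (z k - y k)) \<longlonglongrightarrow> distX BX Bout
      \<and> (\<lambda>k. Xnorm (x k - z k)) \<longlonglongrightarrow> 2)
    \<and> \<not> UC_prop BX Bout \<and> \<not> BUC_prop BX Bout"
proof -
  define c where "c = (\<lambda>k. inverse (2 powr (1 / real (k+2))))"
  define x where "x = (\<lambda>k. dl (k+2) (c k, c k))"
  define z where "z = (\<lambda>k. dl (k+2) (c k, - c k))"
  define y where "y = (\<lambda>k::nat. dl (k+2) (2, 0))"
  have c1: "0 < c k" "c k \<le> 1" for k
  proof -
    have "1 \<le> 2 powr (1 / real (k+2))" by (rule ge_one_powr_ge_zero) auto
    thus "0 < c k" "c k \<le> 1" using le_imp_inverse_le[of 1 "2 powr (1 / real (k+2))"] by (auto simp: c_def)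
  qed
  have c2: "2 powr (1 / real (k+2)) * c k = 1" for k by (simp add: c_def)
  have Xx: "Xnorm (x k) = 1" for k
    unfolding x_def Xnorm_dl using pn_eq[of "k+2" "c k" "c k"] c1[of k] c2[of k] by simp
  have Xz: "Xnorm (z k) = 1" for k
    unfolding z_def Xnorm_dl using pn_eq[of "k+2" "c k" "- c k"] c1[of k] c2[of k] by simp
  have Xy: "Xnorm (y k) = 2" for k
    unfolding y_def Xnorm_dl using pn_0(1)[of "k+2" 2] by simp
  have mem: "x k \<in> BX \<and> z k \<in> BX \<and> y k \<in> Bout" for k
    using Xx[of k] Xz[of k] Xy[of k] inX_dl[of "k+2"]
    by (simp add: BX_def Bout_def x_def y_def z_def)
  have lxy: "(\<lambda>k. Xnorm (x k - y k)) \<longlonglongrightarrow> 1"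
    unfolding x_def y_def dl_diff Xnorm_dl
  proof (rule lim_aux[OF c_def])
    fix k show "max \<bar>fst ((c k, c k) - (2, 0))\<bar> \<bar>snd ((c k, c k) - (2, 0))\<bar> = 2 - c k"
      using c1[of k] by (simp add: max_def)
  qed
  have lzy: "(\<lambda>k. Xnorm (z k - y k)) \<longlonglongrightarrow> 1"
    unfolding z_def y_def dl_diff Xnorm_dl
  proof (rule lim_aux[OF c_def])
    fix k show "max \<bar>fst ((c k, - c k) - (2, 0))\<bar> \<bar>snd ((c k, - c k) - (2, 0))\<bar> = 2 - c k"
      using c1[of k] by (simp add: max_def)
  qed
  have exz: "Xnorm (x k - z k) = 2 * c k" for k
    unfolding x_def z_def dl_diff Xnorm_dl using pn_0(2)[of "k+2" "2 * c k"] c1[of k] by simp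
  have lxz: "(\<lambda>k. Xnorm (x k - z k)) \<longlonglongrightarrow> 2"
    unfolding exz c_def by real_asymp
  have P: "(\<forall>k. x k \<in> BX \<and> z k \<in> BX \<and> y k \<in> Bout)
      \<and> (\<exists>M. \<forall>k. Xnorm (x k) \<le> M \<and> Xnorm (z k) \<le> M)
      \<and> distX BX Bout = 1
      \<and> (\<lambda>k. Xnorm (x k - y k)) \<longlonglongrightarrow> distX BX Bout
      \<and> (\<lambda>k. Xnorm (z k - y k)) \<longlonglongrightarrow> distX BX Bout
      \<and> (\<lambda>k. Xnorm (x k - z k)) \<longlonglongrightarrow> 2"
    using mem Xx Xz lxy lzy lxz distX_eq by auto
  have nB: "\<not> BUC_prop BX Bout"
  proof
    assume "BUC_prop BX Bout"
    then have "(\<lambda>k. Xnorm (x k - z k)) \<longlonglongrightarrow> 0" using P unfolding BUC_prop_def by blast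
    with lxz show False using LIMSEQ_unique by fastforce
  qed
  have nU: "\<not> UC_prop BX Bout"
    using nB unfolding UC_prop_def BUC_prop_def by blast
  show ?thesis using P nB nU by blast
qed

end
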